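(* Let $S$ be a $\Gamma$-hemiring and let $\mu$ be a fuzzy h-ideal of $S$. Then for every $x\in S$, $\langle x,\mu^{+}\rangle$ is a fuzzy h-ideal of $S$, where $\mu^{+}(y)=\mu(y)-\mu(0)+1$ for $y\in S$.
   Context: A $\Gamma$-hemiring is a pair of additive commutative semigroups with zero $S$ and $\Gamma$ with a map $S\times\Gamma\times S\to S$, $(a,\alpha,b)\mapsto a\alpha b$, such that for all $a,b,c\in S$, $\alpha,\beta\in\Gamma$: $(a+b)\alpha c=a\alpha c+b\alpha c$; $a\alpha(b+c)=a\alpha b+a\alpha c$; $a(\alpha+\beta)b=a\alpha b+a\beta b$; $a\alpha(b\beta c)=(a\alpha b)\beta c$; $0\alpha a=0=a\alpha0$; $a0b=0=b0a$. A fuzzy h-ideal of $S$ is a map $\mu:S\to[0,1]$, not identically $0$, such that for all $x,y,a,b,z\in S$, $\gamma\in\Gamma$: $\mu(x+y)\ge\min\{\mu(x),\mu(y)\}$; $\mu(x\gamma y)\ge\mu(x)$ and $\mu(x\gamma y)\ge\mu(y)$; $x+a+z=b+z$ implies $\mu(x)\ge\min\{\mu(a),\mu(b)\}$. The extension of a fuzzy subset $\mu$ by $x$ is $\langle x,\mu\rangle(y)=\inf_{s\in S,\ \alpha,\gamma\in\Gamma}\mu(x\alpha s\gamma y)$. *)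

theory Defs
  imports Complex_Main
begin

definition comm_sgz :: "'a set \<Rightarrow> ('a \<Rightarrow> 'a \<Rightarrow> 'a) \<Rightarrow> 'a \<Rightarrow> bool" where
  "comm_sgz A add z \<longleftrightarrow> z \<in> A \<and>
     (\<forall>a\<in>A. \<forall>b\<in>A. add a b \<in> A) \<and>
     (\<forall>a\<in>A. \<forall>b\<in>A. \<forall>c\<in>A. add (add a b) c = add a (add b c)) \<and>
     (\<forall>a\<in>A. \<forall>b\<in>A. add a b = add b a) \<and>
     (\<forall>a\<in>A. add z a = a)"

definition gamma_hemiring ::
  "'a set \<Rightarrow> ('a \<Rightarrow> 'a \<Rightarrow> 'a) \<Rightarrow> 'a \<Rightarrow> 'b set \<Rightarrow> ('b \<Rightarrow> 'b \<Rightarrow> 'b) \<Rightarrow> 'b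
     \<Rightarrow> ('a \<Rightarrow> 'b \<Rightarrow> 'a \<Rightarrow> 'a) \<Rightarrow> bool" where
  "gamma_hemiring S addS zS G addG zG m \<longleftrightarrow>
     comm_sgz S addS zS \<and> comm_sgz G addG zG \<and>
     (\<forall>a\<in>S. \<forall>\<alpha>\<in>G. \<forall>b\<in>S. m a \<alpha> b \<in> S) \<and>
     (\<forall>a\<in>S. \<forall>b\<in>S. \<forall>c\<in>S. \<forall>\<alpha>\<in>G.
        m (addS a b) \<alpha> c = addS (m a \<alpha> c) (m b \<alpha> c) \<and>
        m a \<alpha> (addS b c) = addS (m a \<alpha> b) (m a \<alpha> c)) \<and>
     (\<forall>a\<in>S. \<forall>b\<in>S. \<forall>\<alpha>\<in>G. \<forall>\<beta>\<in>G. m a (addG \<alpha> \<beta>) b = addS (m a \<alpha> b) (m a \<beta> b)) \<and>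
     (\<forall>a\<in>S. \<forall>b\<in>S. \<forall>c\<in>S. \<forall>\<alpha>\<in>G. \<forall>\<beta>\<in>G. m a \<alpha> (m b \<beta> c) = m (m a \<alpha> b) \<beta> c) \<and>
     (\<forall>a\<in>S. \<forall>\<alpha>\<in>G. m zS \<alpha> a = zS \<and> m a \<alpha> zS = zS) \<and>
     (\<forall>a\<in>S. \<forall>b\<in>S. m a zG b = zS \<and> m b zG a = zS)"

definition fuzzy_h_ideal ::
  "'a set \<Rightarrow> ('a \<Rightarrow> 'a \<Rightarrow> 'a) \<Rightarrow> 'b set \<Rightarrow> ('a \<Rightarrow> 'b \<Rightarrow> 'a \<Rightarrow> 'a) \<Rightarrow> ('a \<Rightarrow> real) \<Rightarrow> bool" where
  "fuzzy_h_ideal S addS G m \<mu> \<longleftrightarrow>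
     (\<forall>x\<in>S. 0 \<le> \<mu> x \<and> \<mu> x \<le> 1) \<and> (\<exists>x\<in>S. \<mu> x \<noteq> 0) \<and>
     (\<forall>x\<in>S. \<forall>y\<in>S. \<mu> (addS x y) \<ge> min (\<mu> x) (\<mu> y)) \<and>
     (\<forall>x\<in>S. \<forall>y\<in>S. \<forall>\<gamma>\<in>G. \<mu> (m x \<gamma> y) \<ge> \<mu> x \<and> \<mu> (m x \<gamma> y) \<ge> \<mu> y) \<and>
     (\<forall>x\<in>S. \<forall>a\<in>S. \<forall>b\<in>S. \<forall>z\<in>S. addS (addS x a) z = addS b z \<longrightarrow>
        \<mu> x \<ge> min (\<mu> a) (\<mu> b))"

definition extension ::
  "'a set \<Rightarrow> 'b set \<Rightarrow> ('a \<Rightarrow> 'b \<Rightarrow> 'a \<Rightarrow> 'a) \<Rightarrow> 'a \<Rightarrow> ('a \<Rightarrow> real) \<Rightarrow> 'a \<Rightarrow> real" where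
  "extension S G m x \<mu> y = (INF p \<in> S \<times> G \<times> G. \<mu> (m (m x (fst (snd p)) (fst p)) (snd (snd p)) y))"

definition mu_plus :: "'a \<Rightarrow> ('a \<Rightarrow> real) \<Rightarrow> 'a \<Rightarrow> real" where
  "mu_plus zS \<mu> y = \<mu> y - \<mu> zS + 1"

end

theory Submission
  imports Defs
begin

theorem proposition3p12:
  fixes S :: "'a set" and G :: "'b set"
  assumes "gamma_hemiring S addS zS G addG zG m"
    and "fuzzy_h_ideal S addS G m \<mu>"
    and "x \<in> S"
  shows "fuzzy_h_ideal S addS G m (extension S G m x (mu_plus zS \<mu>))"
proof -
  note H = assms(1)[unfolded gamma_hemiring_def comm_sgz_def]
  note F = assms(2)[unfolded fuzzy_h_ideal_def]
  have zS: "zS \<in> S" and zG: "zG \<in> G" using H by auto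
  have cl: "\<And>a b. a \<in> S \<Longrightarrow> b \<in> S \<Longrightarrow> addS a b \<in> S" using H by auto
  have mcl: "\<And>a g b. a \<in> S \<Longrightarrow> g \<in> G \<Longrightarrow> b \<in> S \<Longrightarrow> m a g b \<in> S" using H by auto
  have dist: "\<And>a b c g. a \<in> S \<Longrightarrow> b \<in> S \<Longrightarrow> c \<in> S \<Longrightarrow> g \<in> G \<Longrightarrow>
      m a g (addS b c) = addS (m a g b) (m a g c)" using H by auto
  have ass: "\<And>a b c g h. a \<in> S \<Longrightarrow> b \<in> S \<Longrightarrow> c \<in> S \<Longrightarrow> g \<in> G \<Longrightarrow> h \<in> G \<Longrightarrow>
      m a g (m b h c) = m (m a g b) h c" using H by auto
  have mz: "\<And>a g. a \<in> S \<Longrightarrow> g \<in> G \<Longrightarrow> m a g zS = zS" using H by auto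
  have r01: "\<And>y. y \<in> S \<Longrightarrow> 0 \<le> \<mu> y \<and> \<mu> y \<le> 1" using F by blast
  have madd: "\<And>a b. a \<in> S \<Longrightarrow> b \<in> S \<Longrightarrow> \<mu> (addS a b) \<ge> min (\<mu> a) (\<mu> b)" using F by blast
  have mmul: "\<And>a b g. a \<in> S \<Longrightarrow> b \<in> S \<Longrightarrow> g \<in> G \<Longrightarrow> \<mu> (m a g b) \<ge> \<mu> a \<and> \<mu> (m a g b) \<ge> \<mu> b"
    using F by blast
  have mh: "\<And>a b c d. a \<in> S \<Longrightarrow> b \<in> S \<Longrightarrow> c \<in> S \<Longrightarrow> d \<in> S \<Longrightarrow>
      addS (addS a b) d = addS c d \<Longrightarrow> \<mu> a \<ge> min (\<mu> b) (\<mu> c)" using F by blast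
  have mz_max: "\<mu> y \<le> \<mu> zS" if "y \<in> S" for y
    using mmul[OF that zS zG] mz[OF that zG] by simp
  define mp where "mp = mu_plus zS \<mu>"
  have mp_def': "\<And>y. mp y = \<mu> y - \<mu> zS + 1" unfolding mp_def mu_plus_def by simp
  have mp01: "0 \<le> mp y \<and> mp y \<le> 1" if "y \<in> S" for y
    using r01[OF that] r01[OF zS] mz_max[OF that] mp_def' by simp
  define P where "P = S \<times> G \<times> G"
  define t where "t = (\<lambda>p y. m (m x (fst (snd p)) (fst p)) (snd (snd p)) y)"
  define E where "E = extension S G m x mp"
  have E_def': "\<And>y. E y = (INF p \<in> P. mp (t p y))"
    unfolding E_def extension_def P_def t_def by simp
  have Pne: "P \<noteq> {}" using zS zG P_def by auto
  have tS: "t p y \<in> S" if "p \<in> P" "y \<in> S" for p y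
    using that mcl[OF mcl[OF assms(3)]] unfolding P_def t_def by auto
  have wS: "m x (fst (snd p)) (fst p) \<in> S" if "p \<in> P" for p
    using that mcl assms(3) unfolding P_def by auto
  have low: "E y \<le> mp (t p y)" if "p \<in> P" "y \<in> S" for p y
    unfolding E_def'
    by (rule cINF_lower[OF _ that(1)]) (use mp01 tS that in \<open>auto intro!: bdd_belowI2[where m=0]\<close>)
  have great: "c \<le> E y" if "\<And>p. p \<in> P \<Longrightarrow> c \<le> mp (t p y)" for c y
    unfolding E_def' by (rule cINF_greatest[OF Pne that])
  obtain p0 where p0: "p0 \<in> P" using Pne by auto
  have E01: "0 \<le> E y \<and> E y \<le> 1" if "y \<in> S" for y
  proof
    show "0 \<le> E y" using great[of 0 y] mp01 tS that by auto
    show "E y \<le> 1" using low[OF p0 that] mp01[OF tS[OF p0 that]] by linarith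
  qed
  have Ez: "E zS = 1"
  proof -
    have "\<And>p. p \<in> P \<Longrightarrow> t p zS = zS"
      unfolding t_def using mz wS P_def by auto
    hence "\<And>p. p \<in> P \<Longrightarrow> mp (t p zS) = 1" using mp_def' by simp
    hence "1 \<le> E zS" using great by simp
    thus ?thesis using E01[OF zS] by simp
  qed
  have mpadd: "mp (addS a b) \<ge> min (mp a) (mp b)" if "a \<in> S" "b \<in> S" for a b
    using madd[OF that] mp_def' by (simp add: min_def split: if_splits)
  have "fuzzy_h_ideal S addS G m E"
    unfolding fuzzy_h_ideal_def
  proof (intro conjI ballI impI)
    show "\<exists>y\<in>S. E y \<noteq> 0" proof (rule bexI[OF _ zS]) show "E zS \<noteq> 0" using Ez by simp qed
  next
    fix y assume "y \<in> S" thus "0 \<le> E y" "E y \<le> 1" using E01 by auto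
  next
    fix a b assume a: "a \<in> S" and b: "b \<in> S"
    show "min (E a) (E b) \<le> E (addS a b)"
    proof (rule great)
      fix p assume p: "p \<in> P"
      have "t p (addS a b) = addS (t p a) (t p b)"
        unfolding t_def using dist[OF wS[OF p] a b] p P_def by auto
      moreover have "min (E a) (E b) \<le> min (mp (t p a)) (mp (t p b))"
        using low[OF p a] low[OF p b] by (simp add: min_le_iff_disj)
      ultimately show "min (E a) (E b) \<le> mp (t p (addS a b))"
        using mpadd[OF tS[OF p a] tS[OF p b]] by (simp add: min_def split: if_splits)
    qed
  next
    fix a b g assume a: "a \<in> S" and b: "b \<in> S" and g: "g \<in> G"
    show "E a \<le> E (m a g b)"
    proof (rule great)
      fix p assume p: "p \<in> P"
      have "t p (m a g b) = m (t p a) g b"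
        unfolding t_def using ass[OF wS[OF p] a b _ g] p P_def by auto
      thus "E a \<le> mp (t p (m a g b))"
        using low[OF p a] mmul[OF tS[OF p a] b g] mp_def' by simp
    qed
    show "E b \<le> E (m a g b)"
    proof (rule great)
      fix p assume p: "p \<in> P"
      obtain s al ga where pp: "p = (s, al, ga)" by (cases p) auto
      have s: "s \<in> S" and al: "al \<in> G" and ga: "ga \<in> G" using p pp P_def by auto
      define q where "q = (m s ga a, al, g)"
      have q: "q \<in> P" using q_def P_def mcl[OF s ga a] al g by auto
      have "t p (m a g b) = m (m (m x al s) ga a) g b"
        unfolding t_def pp using ass[OF mcl[OF assms(3) al s] a b ga g] by simp
      also have "\<dots> = t q b"
        unfolding t_def q_def using ass[OF assms(3) s a al ga] by simp
      finally show "E b \<le> mp (t p (m a g b))"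
        using low[OF q b] by simp
    qed
  next
    fix x' a b z assume x': "x' \<in> S" and a: "a \<in> S" and b: "b \<in> S" and z: "z \<in> S"
      and eq: "addS (addS x' a) z = addS b z"
    show "min (E a) (E b) \<le> E x'"
    proof (rule great)
      fix p assume p: "p \<in> P"
      obtain s al ga where pp: "p = (s, al, ga)" by (cases p) auto
      have ga: "ga \<in> G" using p pp P_def by auto
      let ?w = "m x al s"
      have w: "?w \<in> S" using wS[OF p] pp by simp
      have "m ?w ga (addS (addS x' a) z) = m ?w ga (addS b z)" using eq by simp
      hence "addS (addS (m ?w ga x') (m ?w ga a)) (m ?w ga z) = addS (m ?w ga b) (m ?w ga z)"
        using dist[OF w cl[OF x' a] z ga] dist[OF w x' a ga] dist[OF w b z ga] by simp
      hence "\<mu> (m ?w ga x') \<ge> min (\<mu> (m ?w ga a)) (\<mu> (m ?w ga b))"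
        by (rule mh[OF mcl[OF w ga x'] mcl[OF w ga a] mcl[OF w ga b] mcl[OF w ga z]])
      hence "mp (t p x') \<ge> min (mp (t p a)) (mp (t p b))"
        unfolding t_def pp using mp_def' by (simp add: min_def split: if_splits)
      thus "min (E a) (E b) \<le> mp (t p x')"
        using low[OF p a] low[OF p b] by linarith
    qed
  qed
  thus ?thesis unfolding E_def mp_def .
qed

end
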